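(* Let $A$ be a complex unital semi-prime Banach algebra, let $J$ be a (two-sided) ideal of $A$, let $\pi:A\to A/J$ be the canonical projection, and let $\tau:J\to\mathbb{C}$ be a trace on $J$. Let $a\in A$ be a B-Fredholm element of $A$ modulo $J$. Then for every $a_0\in A$ such that $\pi(a_0)$ is the Drazin inverse of $\pi(a)$ in $A/J$, one has $aa_0-a_0a\in J$. Moreover, the number $\tau(aa_0-a_0a)$ is the same for all such $a_0$. Consequently the index $\mathbf{i}(a)=\tau(aa_0-a_0a)$ is well defined and independent of the choice of $a_0$.
   Context: A Banach algebra $A$ is semi-prime if, for $u\in A$, $uxu=0$ for all $x\in A$ implies $u=0$. A nonzero element $p$ of a semi-prime algebra $A$ has rank one if there is a linear functional $f_p$ on $A$ with $pxp=f_p(x)p$ for all $x\in A$. An element $x$ of an algebra $B$ is Drazin invertible if there exist $y\in B$ and $k\ge 1$ with $xy=yx$, $yxy=y$, and $x^kyx=x^k$; such $y$ is unique and is called the Drazin inverse of $x$. An element $a\in A$ is a B-Fredholm element of $A$ modulo $J$ if $\pi(a)$ is Drazin invertible in the quotient algebra $A/J$ (the quotient is not required to be a Banach algebra). A trace on $J$ is a function $\tau:J\to\mathbb{C}$ such that: (1) $\tau(p)=1$ for every idempotent $p\in J$ of rank one; (2) $\tau(a+b)=\tau(a)+\tau(b)$ for $a,b\in J$; (3) $\tau(\alpha a)=\alpha\tau(a)$ for $\alpha\in\mathbb{C}$, $a\in J$; (4) $\tau(ab)=\tau(ba)$ for all $a\in J$, $b\in A$. *)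

theory Defs
  imports "HOL-Analysis.Analysis"
begin

text \<open>Complex unital Banach algebras: a real unital Banach algebra with a compatible
  complex scalar multiplication (the distribution has no complex vector space class).\<close>
class complex_banach_algebra_1 = banach + real_normed_algebra_1 +
  fixes scaleC :: "complex \<Rightarrow> 'a \<Rightarrow> 'a"
  assumes scaleC_add_right: "scaleC c (x + y) = scaleC c x + scaleC c y"
    and scaleC_add_left: "scaleC (c + d) x = scaleC c x + scaleC d x"
    and scaleC_scaleC: "scaleC c (scaleC d x) = scaleC (c * d) x"
    and scaleC_one: "scaleC 1 x = x"
    and scaleR_scaleC: "scaleR r x = scaleC (complex_of_real r) x"
    and mult_scaleC_left: "scaleC c x * y = scaleC c (x * y)"
    and mult_scaleC_right: "x * scaleC c y = scaleC c (x * y)"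
    and norm_scaleC: "norm (scaleC c x) = cmod c * norm x"

definition semi_prime :: "'a::complex_banach_algebra_1 itself \<Rightarrow> bool" where
  "semi_prime _ \<longleftrightarrow> (\<forall>u::'a. (\<forall>x. u * x * u = 0) \<longrightarrow> u = 0)"

definition clinear_functional :: "('a::complex_banach_algebra_1 \<Rightarrow> complex) \<Rightarrow> bool" where
  "clinear_functional f \<longleftrightarrow> (\<forall>x y. f (x + y) = f x + f y) \<and> (\<forall>c x. f (scaleC c x) = c * f x)"

definition rank_one :: "'a::complex_banach_algebra_1 \<Rightarrow> bool" where
  "rank_one p \<longleftrightarrow> p \<noteq> 0 \<and> (\<exists>f. clinear_functional f \<and> (\<forall>x. p * x * p = scaleC (f x) p))"

definition alg_ideal :: "'a::complex_banach_algebra_1 set \<Rightarrow> bool" where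
  "alg_ideal J \<longleftrightarrow> 0 \<in> J \<and> (\<forall>x\<in>J. \<forall>y\<in>J. x + y \<in> J) \<and> (\<forall>c. \<forall>x\<in>J. scaleC c x \<in> J)
     \<and> (\<forall>x\<in>J. \<forall>a. a * x \<in> J \<and> x * a \<in> J)"

text \<open>pi(y) is the Drazin inverse of pi(x) in A/J, written out via pi(u) = pi(v) iff u - v in J.\<close>
definition drazin_inverse_mod :: "'a::complex_banach_algebra_1 set \<Rightarrow> 'a \<Rightarrow> 'a \<Rightarrow> bool" where
  "drazin_inverse_mod J x y \<longleftrightarrow>
     (\<exists>k::nat. k \<ge> 1 \<and> x * y - y * x \<in> J \<and> y * x * y - y \<in> J \<and> x ^ k * y * x - x ^ k \<in> J)"

definition B_Fredholm_mod :: "'a::complex_banach_algebra_1 set \<Rightarrow> 'a \<Rightarrow> bool" where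
  "B_Fredholm_mod J a \<longleftrightarrow> (\<exists>y. drazin_inverse_mod J a y)"

definition is_trace :: "'a::complex_banach_algebra_1 set \<Rightarrow> ('a \<Rightarrow> complex) \<Rightarrow> bool" where
  "is_trace J \<tau> \<longleftrightarrow>
     (\<forall>p\<in>J. p * p = p \<and> rank_one p \<longrightarrow> \<tau> p = 1)
   \<and> (\<forall>a\<in>J. \<forall>b\<in>J. \<tau> (a + b) = \<tau> a + \<tau> b)
   \<and> (\<forall>\<alpha>. \<forall>a\<in>J. \<tau> (scaleC \<alpha> a) = \<alpha> * \<tau> a)
   \<and> (\<forall>a\<in>J. \<forall>b. \<tau> (a * b) = \<tau> (b * a))"

end

theory Submission
  imports Defs
begin

context
  fixes J :: "'a::complex_banach_algebra_1 set"
  assumes I: "alg_ideal J"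
begin

lemma J0: "0 \<in> J" using I by (simp add: alg_ideal_def)
lemma Jadd: "u \<in> J \<Longrightarrow> v \<in> J \<Longrightarrow> u + v \<in> J" using I by (simp add: alg_ideal_def)
lemma Jl: "u \<in> J \<Longrightarrow> b * u \<in> J" using I by (simp add: alg_ideal_def)
lemma Jr: "u \<in> J \<Longrightarrow> u * b \<in> J" using I by (simp add: alg_ideal_def)
lemma Jneg: "u \<in> J \<Longrightarrow> - u \<in> J"
proof -
  assume "u \<in> J"
  hence "scaleC (complex_of_real (-1)) u \<in> J" using I by (simp add: alg_ideal_def)
  moreover have "scaleC (complex_of_real (-1)) u = - u"
    by (metis scaleR_scaleC scaleR_minus1_left)
  ultimately show ?thesis by simp
qed

lemma c_refl: "u - u \<in> J" using J0 by simp
lemma c_sym: "u - v \<in> J \<Longrightarrow> v - u \<in> J" using Jneg by fastforce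
lemma c_trans: "u - v \<in> J \<Longrightarrow> v - w \<in> J \<Longrightarrow> u - w \<in> J"
  using Jadd by fastforce
lemma c_mult: "u - u' \<in> J \<Longrightarrow> v - v' \<in> J \<Longrightarrow> u * v - u' * v' \<in> J"
proof -
  assume a: "u - u' \<in> J" "v - v' \<in> J"
  have "u * v - u' * v' = (u - u') * v + u' * (v - v')" by (simp add: algebra_simps)
  thus ?thesis using a Jadd Jl Jr by simp
qed
lemma c_ml: "v - v' \<in> J \<Longrightarrow> u * v - u * v' \<in> J" using c_mult c_refl by blast
lemma c_mr: "u - u' \<in> J \<Longrightarrow> u * v - u' * v \<in> J" using c_mult c_refl by blast

lemma L1: "x * y - y * x \<in> J \<Longrightarrow> x ^ n * y - y * x ^ n \<in> J"
proof (induction n)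
  case 0 thus ?case using c_refl by simp
next
  case (Suc n)
  have "x ^ Suc n * y = x * (x ^ n * y)" by (simp add: mult.assoc)
  moreover have "x * (x ^ n * y) - x * (y * x ^ n) \<in> J" using Suc c_ml by blast
  moreover have "x * (y * x ^ n) - y * x * x ^ n \<in> J"
    using c_mr[OF Suc.prems, of "x^n"] by (simp add: mult.assoc)
  moreover have "y * x * x ^ n = y * x ^ Suc n" by (simp add: mult.assoc)
  ultimately show ?case using c_trans by metis
qed

lemma yyx: assumes "x * y - y * x \<in> J" "y * x * y - y \<in> J" shows "y - y * y * x \<in> J"
proof -
  have "y * x * y - y * (y * x) \<in> J" using c_ml[OF assms(1), of y] by (simp add: mult.assoc)
  thus ?thesis using assms(2) c_sym c_trans by (metis mult.assoc)
qed

lemma xzz: assumes "x * z - z * x \<in> J" "z * x * z - z \<in> J" shows "z - x * z * z \<in> J"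
proof -
  have "z * x * z - x * z * z \<in> J" using c_mr[OF c_sym[OF assms(1)], of z] .
  thus ?thesis using assms(2) c_sym c_trans by metis
qed

lemma L2: assumes "x * y - y * x \<in> J" "y * x * y - y \<in> J"
  shows "y - y ^ Suc n * x ^ n \<in> J"
proof (induction n)
  case 0 thus ?case using c_refl by simp
next
  case (Suc n)
  have e: "y ^ Suc (Suc n) * x ^ Suc n = y ^ n * (y * y * x) * x ^ n"
    by (metis mult.assoc power_Suc power_Suc2)
  have "y ^ n * (y * y * x) * x ^ n - y ^ n * y * x ^ n \<in> J"
    using c_mr[OF c_ml[OF c_sym[OF yyx[OF assms]]]] .
  moreover have "y ^ n * y * x ^ n = y ^ Suc n * x ^ n" by (simp add: power_commutes)
  ultimately show ?case using Suc c_trans c_sym e by metis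
qed

lemma L2': assumes "x * z - z * x \<in> J" "z * x * z - z \<in> J"
  shows "z - x ^ n * z ^ Suc n \<in> J"
proof (induction n)
  case 0 thus ?case using c_refl by simp
next
  case (Suc n)
  have e: "x ^ Suc n * z ^ Suc (Suc n) = x ^ n * (x * z * z) * z ^ n"
    by (metis mult.assoc power_Suc power_Suc2)
  have "x ^ n * (x * z * z) * z ^ n - x ^ n * z * z ^ n \<in> J"
    using c_mr[OF c_ml[OF c_sym[OF xzz[OF assms]]]] by (simp add: mult.assoc)
  moreover have "x ^ n * z * z ^ n = x ^ n * z ^ Suc n" by (simp add: mult.assoc)
  ultimately show ?case using Suc c_trans c_sym e by metis
qed

lemma L3: assumes "x * y - y * x \<in> J" "y * x * y - y \<in> J"
  shows "y ^ Suc n * x ^ Suc n - y * x \<in> J"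
proof (induction n)
  case 0 thus ?case using c_refl by simp
next
  case (Suc n)
  have e: "y ^ Suc (Suc n) * x ^ Suc (Suc n) = y * (y ^ Suc n * x ^ Suc n) * x"
    by (simp add: mult.assoc power_commutes)
  have "y * (y ^ Suc n * x ^ Suc n) * x - y * (y * x) * x \<in> J"
    using c_mr[OF c_ml[OF Suc]] .
  moreover have "y * (y * x) * x - y * x \<in> J"
    using c_mr[OF c_sym[OF yyx[OF assms]], of x] by (simp add: mult.assoc)
  ultimately show ?case using c_trans e by metis
qed

lemma L3': assumes "x * z - z * x \<in> J" "z * x * z - z \<in> J"
  shows "x ^ Suc n * z ^ Suc n - x * z \<in> J"
proof (induction n)
  case 0 thus ?case using c_refl by simp
next
  case (Suc n)
  have e: "x ^ Suc (Suc n) * z ^ Suc (Suc n) = x * (x ^ Suc n * z ^ Suc n) * z"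
    by (simp add: mult.assoc power_commutes)
  have "x * (x ^ Suc n * z ^ Suc n) * z - x * (x * z) * z \<in> J"
    using c_mr[OF c_ml[OF Suc]] .
  moreover have "x * (x * z) * z - x * z \<in> J"
    using c_ml[OF c_sym[OF xzz[OF assms]], of x] by (simp add: mult.assoc)
  ultimately show ?case using c_trans e by metis
qed

lemma raise: assumes "x ^ k * y * x - x ^ k \<in> J" "k \<le> m" shows "x ^ m * y * x - x ^ m \<in> J"
proof -
  have "x ^ (m - k) * (x ^ k * y * x) - x ^ (m - k) * x ^ k \<in> J" using c_ml[OF assms(1)] .
  moreover have "x ^ (m - k) * x ^ k = x ^ m" using assms(2) by (simp add: power_add[symmetric])
  ultimately show ?thesis by (metis mult.assoc)
qed

lemma uniq:
  assumes "drazin_inverse_mod J x y" "drazin_inverse_mod J x z"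
  shows "y - z \<in> J"
proof -
  obtain k where k: "x * y - y * x \<in> J" "y * x * y - y \<in> J" "x ^ k * y * x - x ^ k \<in> J"
    using assms(1) by (auto simp: drazin_inverse_mod_def)
  obtain l where l: "x * z - z * x \<in> J" "z * x * z - z \<in> J" "x ^ l * z * x - x ^ l \<in> J"
    using assms(2) by (auto simp: drazin_inverse_mod_def)
  define m where "m = max k l"
  have ym: "x ^ m * y * x - x ^ m \<in> J" using raise[OF k(3)] m_def by simp
  have zm: "x ^ m * z * x - x ^ m \<in> J" using raise[OF l(3)] m_def by simp
  have A: "x ^ m - x ^ Suc m * z \<in> J"
  proof -
    have "x ^ m * (z * x) - x ^ m * (x * z) \<in> J" using c_ml[OF c_sym[OF l(1)]] .
    hence "x ^ m * z * x - x ^ Suc m * z \<in> J" by (metis mult.assoc power_Suc2)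
    thus ?thesis using zm c_sym c_trans by metis
  qed
  have B: "x ^ m - y * x ^ Suc m \<in> J"
  proof -
    have "x ^ m * y * x - y * x ^ m * x \<in> J" using c_mr[OF L1[OF k(1)]] .
    hence "x ^ m * y * x - y * x ^ Suc m \<in> J" by (metis mult.assoc power_Suc2)
    thus ?thesis using ym c_sym c_trans by metis
  qed
  have Y: "y - y * x * z \<in> J"
  proof -
    have "y ^ Suc m * x ^ m - y ^ Suc m * (x ^ Suc m * z) \<in> J" using c_ml[OF A] .
    moreover have "y ^ Suc m * (x ^ Suc m * z) - y * x * z \<in> J"
      using c_mr[OF L3[OF k(1,2), of m], of z] by (simp add: mult.assoc)
    ultimately show ?thesis using L2[OF k(1,2), of m] c_trans by metis
  qed
  have Z: "z - y * x * z \<in> J"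
  proof -
    have "x ^ m * z ^ Suc m - y * x ^ Suc m * z ^ Suc m \<in> J" using c_mr[OF B] .
    moreover have "y * x ^ Suc m * z ^ Suc m - y * (x * z) \<in> J"
      using c_ml[OF L3'[OF l(1,2), of m], of y] by (simp add: mult.assoc)
    ultimately show ?thesis using L2'[OF l(1,2), of m] c_trans by (metis mult.assoc)
  qed
  show ?thesis using Y Z c_sym c_trans by metis
qed

end

theorem theorem2p3:
  fixes J :: "'a::complex_banach_algebra_1 set" and \<tau> :: "'a \<Rightarrow> complex" and a :: 'a
  assumes "semi_prime TYPE('a)"
    and "alg_ideal J"
    and "is_trace J \<tau>"
    and "B_Fredholm_mod J a"
  shows "(\<forall>a0. drazin_inverse_mod J a a0 \<longrightarrow> a * a0 - a0 * a \<in> J)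
       \<and> (\<forall>a0 a1. drazin_inverse_mod J a a0 \<longrightarrow> drazin_inverse_mod J a a1 \<longrightarrow>
            \<tau> (a * a0 - a0 * a) = \<tau> (a * a1 - a1 * a))"
proof -
  have P1: "\<forall>a0. drazin_inverse_mod J a a0 \<longrightarrow> a * a0 - a0 * a \<in> J"
    by (auto simp: drazin_inverse_mod_def)
  have tadd: "\<And>u v. u \<in> J \<Longrightarrow> v \<in> J \<Longrightarrow> \<tau> (u + v) = \<tau> u + \<tau> v"
    using assms(3) by (simp add: is_trace_def)
  have tcomm: "\<And>u b. u \<in> J \<Longrightarrow> \<tau> (u * b) = \<tau> (b * u)"
    using assms(3) unfolding is_trace_def by blast
  have tneg: "\<And>u. u \<in> J \<Longrightarrow> \<tau> (- u) = - \<tau> u"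
  proof -
    fix u assume u: "u \<in> J"
    have "\<tau> (scaleC (complex_of_real (-1)) u) = complex_of_real (-1) * \<tau> u"
      using assms(3) u by (simp add: is_trace_def)
    moreover have "scaleC (complex_of_real (-1)) u = - u"
      by (metis scaleR_scaleC scaleR_minus1_left)
    ultimately show "\<tau> (- u) = - \<tau> u" by simp
  qed
  have P2: "\<tau> (a * a0 - a0 * a) = \<tau> (a * a1 - a1 * a)"
    if h0: "drazin_inverse_mod J a a0" and h1: "drazin_inverse_mod J a a1" for a0 a1
  proof -
    define d where "d = a0 - a1"
    have d: "d \<in> J" using uniq[OF assms(2) h0 h1] d_def by simp
    have X: "a * a0 - a0 * a \<in> J" "a * a1 - a1 * a \<in> J" using P1 h0 h1 by auto
    have ad: "a * d \<in> J" "d * a \<in> J" using d assms(2) by (auto simp: alg_ideal_def)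
    have e: "a * a0 - a0 * a = (a * a1 - a1 * a) + (a * d + - (d * a))"
      by (simp add: d_def algebra_simps)
    have w: "a * d + - (d * a) \<in> J" using Jadd[OF assms(2) ad(1) Jneg[OF assms(2) ad(2)]] .
    have "\<tau> (a * d + - (d * a)) = 0"
      using tadd[OF ad(1) Jneg[OF assms(2) ad(2)]] tneg[OF ad(2)] tcomm[OF d, of a] by simp
    thus ?thesis using e tadd[OF X(2) w] by simp
  qed
  show ?thesis using P1 P2 by blast
qed

end
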